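(* Let $\Sigma$ be an alphabet with $|\Sigma|\ge 2$ and let $W\subseteq\Sigma^*$ be any finite set of words. Then there exist minimized DFAs $D$ and $D'$ over $\Sigma$ with $F(D)=F(D')=\varnothing$ and $L(D)\triangle L(D')=W$.
   Context: All DFAs are complete and all states are reachable; a DFA is \emph{minimized} if it is the minimal DFA for its language. For a DFA $D$ with start state $q_0$ and transition function $\delta$, the finite part $F(D)$ is the set of states $r$ such that $\{w\in\Sigma^*:\delta(q_0,w)=r\}$ is finite. *)

theory Defs
  imports Main
begin

record ('q, 'a) dfa =
  states :: "'q set"
  start  :: 'q
  delta  :: "'q \<Rightarrow> 'a \<Rightarrow> 'q"
  accept :: "'q set"

definition delta_hat :: "('q, 'a) dfa \<Rightarrow> 'q \<Rightarrow> 'a list \<Rightarrow> 'q" where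
  "delta_hat D q w = foldl (delta D) q w"

definition is_dfa :: "'a set \<Rightarrow> ('q, 'a) dfa \<Rightarrow> bool" where
  "is_dfa Al D \<longleftrightarrow>
     finite (states D) \<and> start D \<in> states D \<and> accept D \<subseteq> states D \<and>
     (\<forall>q\<in>states D. \<forall>a\<in>Al. delta D q a \<in> states D) \<and>
     (\<forall>q\<in>states D. \<exists>w\<in>lists Al. delta_hat D (start D) w = q)"

definition lang :: "'a set \<Rightarrow> ('q, 'a) dfa \<Rightarrow> 'a list set" where
  "lang Al D = {w \<in> lists Al. delta_hat D (start D) w \<in> accept D}"

text \<open>Every finite DFA is
  isomorphic to one whose states are natural numbers, so comparing against nat-state
  DFAs is comparing against all DFAs.\<close>
definition minimized :: "'a set \<Rightarrow> ('q, 'a) dfa \<Rightarrow> bool" where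
  "minimized Al D \<longleftrightarrow> is_dfa Al D \<and>
     (\<forall>D' :: (nat, 'a) dfa. is_dfa Al D' \<and> lang Al D' = lang Al D
        \<longrightarrow> card (states D) \<le> card (states D'))"

definition finite_part :: "'a set \<Rightarrow> ('q, 'a) dfa \<Rightarrow> 'q set" where
  "finite_part Al D =
     {r \<in> states D. finite {w \<in> lists Al. delta_hat D (start D) w = r}}"

end

theory Submission
  imports Defs
begin

lemma dh_Nil[simp]: "delta_hat D q [] = q"
  by (simp add: delta_hat_def)

lemma dh_Cons[simp]: "delta_hat D q (a#w) = delta_hat D (delta D q a) w"
  by (simp add: delta_hat_def)

lemma dh_append: "delta_hat D q (u@v) = delta_hat D (delta_hat D q u) v"
  by (simp add: delta_hat_def)

lemma dh_states:
  assumes "is_dfa Al D" "w \<in> lists Al"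
  shows "q \<in> states D \<Longrightarrow> delta_hat D q w \<in> states D"
  using assms(2)
proof (induction w arbitrary: q)
  case Nil then show ?case by simp
next
  case (Cons a w)
  then show ?case using assms(1) by (auto simp: is_dfa_def)
qed

definition rename :: "('q \<Rightarrow> nat) \<Rightarrow> ('q, 'a) dfa \<Rightarrow> (nat, 'a) dfa" where
  "rename f D = \<lparr>states = f ` states D, start = f (start D),
     delta = (\<lambda>q a. f (delta D (the_inv_into (states D) f q) a)), accept = f ` accept D\<rparr>"

lemma rename_dh:
  assumes "is_dfa Al D" "inj_on f (states D)" "w \<in> lists Al"
  shows "q \<in> states D \<Longrightarrow> delta_hat (rename f D) (f q) w = f (delta_hat D q w)"
  using assms(3)
proof (induction w arbitrary: q)
  case Nil then show ?case by simp
next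
  case (Cons a w)
  have "delta D q a \<in> states D" using Cons assms(1) by (auto simp: is_dfa_def)
  moreover have "delta (rename f D) (f q) a = f (delta D q a)"
    using Cons.prems assms(2) by (simp add: rename_def the_inv_into_f_f)
  ultimately show ?case using Cons by simp
qed

lemma rename_props:
  assumes "is_dfa Al D" "inj_on f (states D)"
  shows "is_dfa Al (rename f D)" "lang Al (rename f D) = lang Al D"
    "card (states (rename f D)) = card (states D)"
    "finite_part Al D = {} \<Longrightarrow> finite_part Al (rename f D) = {}"
proof -
  have st: "start D \<in> states D" and acc: "accept D \<subseteq> states D"
    using assms(1) by (auto simp: is_dfa_def)
  have dh: "\<And>w. w \<in> lists Al \<Longrightarrow> delta_hat (rename f D) (start (rename f D)) w = f (delta_hat D (start D) w)"
    using rename_dh[OF assms, of _ "start D"] st by (simp add: rename_def)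
  show "is_dfa Al (rename f D)"
    unfolding is_dfa_def
  proof (intro conjI ballI)
    show "finite (states (rename f D))" using assms(1) by (simp add: rename_def is_dfa_def)
    show "start (rename f D) \<in> states (rename f D)" using st by (simp add: rename_def)
    show "accept (rename f D) \<subseteq> states (rename f D)" using acc by (auto simp: rename_def)
  next
    fix q a assume q: "q \<in> states (rename f D)" and a: "a \<in> Al"
    then obtain q0 where q0: "q0 \<in> states D" "q = f q0" by (auto simp: rename_def)
    then have "delta (rename f D) q a = f (delta D q0 a)"
      using assms(2) by (simp add: rename_def the_inv_into_f_f)
    then show "delta (rename f D) q a \<in> states (rename f D)"
      using q0 a assms(1) by (auto simp: is_dfa_def rename_def)
  next
    fix q assume q: "q \<in> states (rename f D)"
    then obtain q0 where q0: "q0 \<in> states D" "q = f q0" by (auto simp: rename_def)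
    then obtain w where "w \<in> lists Al" "delta_hat D (start D) w = q0"
      using assms(1) unfolding is_dfa_def by blast
    then show "\<exists>w\<in>lists Al. delta_hat (rename f D) (start (rename f D)) w = q"
      using dh q0 by auto
  qed
  show "lang Al (rename f D) = lang Al D"
  proof -
    have "\<And>w. w \<in> lists Al \<Longrightarrow> (f (delta_hat D (start D) w) \<in> f ` accept D) = (delta_hat D (start D) w \<in> accept D)"
      using dh_states[OF assms(1) _ st] acc assms(2)
      by (meson inj_on_image_mem_iff)
    moreover have "accept (rename f D) = f ` accept D" by (simp add: rename_def)
    ultimately show ?thesis using dh unfolding lang_def
      by (metis (no_types, lifting))
  qed
  show "card (states (rename f D)) = card (states D)"
    using assms(2) by (simp add: rename_def card_image)
  assume fp: "finite_part Al D = {}"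
  show "finite_part Al (rename f D) = {}"
  proof (rule ccontr)
    assume "finite_part Al (rename f D) \<noteq> {}"
    then obtain q where q: "q \<in> states (rename f D)"
      and fin: "finite {w \<in> lists Al. delta_hat (rename f D) (start (rename f D)) w = q}"
      by (auto simp: finite_part_def)
    then obtain q0 where q0: "q0 \<in> states D" "q = f q0" by (auto simp: rename_def)
    have "{w \<in> lists Al. delta_hat D (start D) w = q0} \<subseteq> {w \<in> lists Al. delta_hat (rename f D) (start (rename f D)) w = q}"
      using dh q0 by auto
    then have "finite {w \<in> lists Al. delta_hat D (start D) w = q0}" using fin finite_subset by blast
    then show False using fp q0 by (auto simp: finite_part_def)
  qed
qed


definition res :: "'a set \<Rightarrow> 'a list set \<Rightarrow> 'a list \<Rightarrow> 'a list set" where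
  "res Al L u = {v \<in> lists Al. u @ v \<in> L}"

definition quot :: "'a set \<Rightarrow> 'a list set \<Rightarrow> ('a list set, 'a) dfa" where
  "quot Al L = \<lparr>states = res Al L ` lists Al, start = res Al L [],
     delta = (\<lambda>R a. {v \<in> lists Al. a # v \<in> R}),
     accept = {R \<in> res Al L ` lists Al. [] \<in> R}\<rparr>"

lemma quot_dh:
  assumes "u \<in> lists Al"
  shows "delta_hat (quot Al L) (res Al L u0) u = res Al L (u0 @ u)"
  using assms
proof (induction u arbitrary: u0)
  case Nil then show ?case by simp
next
  case (Cons a u)
  have "delta (quot Al L) (res Al L u0) a = res Al L (u0 @ [a])"
  proof -
    have "a \<in> Al" using Cons by auto
    then show ?thesis by (auto simp: quot_def res_def)
  qed
  then show ?case using Cons by simp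
qed

lemma quot_dh0:
  assumes "u \<in> lists Al"
  shows "delta_hat (quot Al L) (start (quot Al L)) u = res Al L u"
  using quot_dh[OF assms, of L "[]"] by (simp add: quot_def)

lemma res_state:
  assumes "is_dfa Al D" "u \<in> lists Al"
  shows "res Al (lang Al D) u = {v \<in> lists Al. delta_hat D (delta_hat D (start D) u) v \<in> accept D}"
  using assms(2) by (auto simp: res_def lang_def dh_append)

lemma minimize:
  fixes D :: "('q, 'a) dfa"
  assumes D: "is_dfa Al D" and fp: "finite_part Al D = {}"
  shows "\<exists>M :: (nat, 'a) dfa. minimized Al M \<and> finite_part Al M = {} \<and> lang Al M = lang Al D"
proof -
  define L where "L = lang Al D"
  define Q where "Q = quot Al L"
  define G where "G = (\<lambda>q. {v \<in> lists Al. delta_hat D q v \<in> accept D})"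
  have st: "start D \<in> states D" using D by (simp add: is_dfa_def)
  have resG: "\<And>u. u \<in> lists Al \<Longrightarrow> res Al L u = G (delta_hat D (start D) u)"
    using res_state[OF D] by (simp add: L_def G_def)
  have sQ: "states Q = res Al L ` lists Al" by (simp add: Q_def quot_def)
  have dQ: "\<And>u. u \<in> lists Al \<Longrightarrow> delta_hat Q (start Q) u = res Al L u"
    using quot_dh0 by (simp add: Q_def)
  have "states Q \<subseteq> G ` states D"
  proof
    fix R assume "R \<in> states Q"
    then obtain u where u: "u \<in> lists Al" "R = res Al L u" using sQ by blast
    then show "R \<in> G ` states D" using resG dh_states[OF D u(1) st] by blast
  qed
  then have finQ: "finite (states Q)"
    using D by (meson finite_imageI finite_subset is_dfa_def)
  have LQ: "lang Al Q = L"
  proof -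
    have sub: "L \<subseteq> lists Al" by (auto simp: L_def lang_def)
    have eq: "\<And>u. u \<in> lists Al \<Longrightarrow> delta_hat Q (start Q) u \<in> accept Q \<longleftrightarrow> u \<in> L"
      using dQ by (auto simp: Q_def quot_def res_def)
    show ?thesis
    proof (intro set_eqI iffI)
      fix u assume "u \<in> lang Al Q"
      then have lu: "u \<in> lists Al" and a: "delta_hat Q (start Q) u \<in> accept Q"
        unfolding lang_def by auto
      show "u \<in> L" using iffD1[OF eq[OF lu] a] .
    next
      fix u assume u: "u \<in> L"
      have lu: "u \<in> lists Al" using subsetD[OF sub u] .
      have "delta_hat Q (start Q) u \<in> accept Q" using iffD2[OF eq[OF lu] u] .
      then show "u \<in> lang Al Q" using lu unfolding lang_def by simp
    qed
  qed
  have dfaQ: "is_dfa Al Q"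
    unfolding is_dfa_def
  proof (intro conjI ballI)
    show "finite (states Q)" by (rule finQ)
    show "start Q \<in> states Q" by (simp add: Q_def quot_def)
    show "accept Q \<subseteq> states Q" by (auto simp: Q_def quot_def)
  next
    fix R a assume "R \<in> states Q" "a \<in> Al"
    then obtain u where u: "u \<in> lists Al" "R = res Al L u" using sQ by blast
    have "delta Q R a = res Al L (u @ [a])"
      using u \<open>a \<in> Al\<close> by (auto simp: Q_def quot_def res_def)
    moreover have "u @ [a] \<in> lists Al" using u \<open>a \<in> Al\<close> by simp
    ultimately show "delta Q R a \<in> states Q" unfolding sQ by (rule image_eqI)
  next
    fix R assume "R \<in> states Q"
    then obtain u where u: "u \<in> lists Al" "R = res Al L u" using sQ by blast
    then show "\<exists>w\<in>lists Al. delta_hat Q (start Q) w = R" using dQ u by metis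
  qed
  have minQ: "card (states Q) \<le> card (states D')"
    if D': "is_dfa Al D'" and LD': "lang Al D' = L" for D' :: "(nat, 'a) dfa"
  proof -
    define ch where "ch = (\<lambda>R. SOME u. u \<in> lists Al \<and> res Al L u = R)"
    have ch: "ch R \<in> lists Al \<and> res Al L (ch R) = R" if "R \<in> states Q" for R
    proof -
      have "R \<in> res Al L ` lists Al" using that by (simp only: sQ)
      then have "\<exists>u. u \<in> lists Al \<and> res Al L u = R" by blast
      then show ?thesis unfolding ch_def by (rule someI_ex)
    qed
    define h where "h = (\<lambda>R. delta_hat D' (start D') (ch R))"
    have st': "start D' \<in> states D'" using D' by (simp add: is_dfa_def)
    have "inj_on h (states Q)"
    proof (rule inj_onI)
      fix R1 R2 assume R: "R1 \<in> states Q" "R2 \<in> states Q" "h R1 = h R2"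
      have c1: "ch R1 \<in> lists Al" using ch[OF R(1)] by blast
      have c2: "ch R2 \<in> lists Al" using ch[OF R(2)] by blast
      have "ch R1 @ v \<in> L \<longleftrightarrow> ch R2 @ v \<in> L" if v: "v \<in> lists Al" for v
      proof -
        have "ch R1 @ v \<in> L \<longleftrightarrow> delta_hat D' (h R1) v \<in> accept D'"
          unfolding LD'[symmetric] lang_def h_def using c1 v by (simp add: dh_append)
        moreover have "ch R2 @ v \<in> L \<longleftrightarrow> delta_hat D' (h R2) v \<in> accept D'"
          unfolding LD'[symmetric] lang_def h_def using c2 v by (simp add: dh_append)
        ultimately show ?thesis using R(3) by simp
      qed
      then have "res Al L (ch R1) = res Al L (ch R2)"
        unfolding res_def by blast
      then show "R1 = R2" using ch[OF R(1)] ch[OF R(2)] by simp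
    qed
    moreover have "h ` states Q \<subseteq> states D'"
    proof
      fix x assume "x \<in> h ` states Q"
      then obtain R where R: "R \<in> states Q" "x = h R" by blast
      have "ch R \<in> lists Al" using ch[OF R(1)] by blast
      from dh_states[OF D' this st'] show "x \<in> states D'" using R(2) by (simp add: h_def)
    qed
    moreover have "finite (states D')" using D' by (simp add: is_dfa_def)
    ultimately show ?thesis by (rule card_inj_on_le)
  qed
  have fpQ: "finite_part Al Q = {}"
  proof (rule ccontr)
    assume "finite_part Al Q \<noteq> {}"
    then obtain R where R: "R \<in> states Q"
      and fin: "finite {w \<in> lists Al. delta_hat Q (start Q) w = R}"
      by (auto simp: finite_part_def)
    then obtain u where u: "u \<in> lists Al" "R = res Al L u" using sQ by blast
    define q where "q = delta_hat D (start D) u"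
    have q: "q \<in> states D" using dh_states[OF D u(1) st] by (simp add: q_def)
    have "{w \<in> lists Al. delta_hat D (start D) w = q} \<subseteq> {w \<in> lists Al. delta_hat Q (start Q) w = R}"
    proof
      fix w assume "w \<in> {w \<in> lists Al. delta_hat D (start D) w = q}"
      then have w: "w \<in> lists Al" "delta_hat D (start D) w = q" by auto
      have "delta_hat Q (start Q) w = res Al L w" using dQ[OF w(1)] .
      also have "\<dots> = G q" using resG[OF w(1)] w(2) by simp
      also have "\<dots> = R" using resG[OF u(1)] u(2) q_def by simp
      finally show "w \<in> {w \<in> lists Al. delta_hat Q (start Q) w = R}" using w(1) by simp
    qed
    then have "finite {w \<in> lists Al. delta_hat D (start D) w = q}" using fin finite_subset by blast
    then show False using fp q by (auto simp: finite_part_def)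
  qed
  obtain f where f: "bij_betw f (states Q) {0..<card (states Q)}"
    using ex_bij_betw_finite_nat[OF finQ] by blast
  then have inj: "inj_on f (states Q)" by (rule bij_betw_imp_inj_on)
  define M where "M = rename f Q"
  have "minimized Al M"
    unfolding minimized_def M_def
    using rename_props[OF dfaQ inj] minQ LQ by auto
  moreover have "finite_part Al M = {}" using rename_props(4)[OF dfaQ inj fpQ] by (simp add: M_def)
  moreover have "lang Al M = lang Al D" using rename_props(2)[OF dfaQ inj] LQ by (simp add: M_def L_def)
  ultimately show ?thesis by blast
qed


definition stp :: "'a \<Rightarrow> nat \<Rightarrow> ('a list \<times> bool) \<Rightarrow> 'a \<Rightarrow> ('a list \<times> bool)" where
  "stp a N = (\<lambda>(p, c) x. if Suc (length p) < N then (p @ [x], c) else ([], p @ [x] \<noteq> replicate N a))"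

definition EE :: "'a set \<Rightarrow> 'a list set \<Rightarrow> 'a \<Rightarrow> nat \<Rightarrow> bool \<Rightarrow> ('a list \<times> bool, 'a) dfa" where
  "EE Al W a N m = \<lparr>states = {p \<in> lists Al. length p < N} \<times> UNIV, start = ([], m),
     delta = stp a N, accept = {p \<in> W. length p < N} \<times> {False}\<rparr>"

lemma EE_dh: "delta_hat (EE Al W a N m) q w = foldl (stp a N) q w"
  by (simp add: delta_hat_def EE_def)

lemma stp_short: "length p + length w < N \<Longrightarrow> foldl (stp a N) (p, c) w = (p @ w, c)"
proof (induction w arbitrary: p)
  case Nil then show ?case by simp
next
  case (Cons x w)
  then have "stp a N (p, c) x = (p @ [x], c)" by (simp add: stp_def)
  then show ?case using Cons.IH[of "p @ [x]"] Cons.prems by simp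
qed

lemma stp_block: "w \<noteq> [] \<Longrightarrow> length p + length w = N \<Longrightarrow>
  foldl (stp a N) (p, c) w = ([], p @ w \<noteq> replicate N a)"
proof (induction w arbitrary: p)
  case Nil then show ?case by simp
next
  case (Cons x w)
  show ?case
  proof (cases "w = []")
    case True
    then show ?thesis using Cons.prems by (simp add: stp_def)
  next
    case False
    then have "length w > 0" by simp
    moreover have "length (x # w) = Suc (length w)" by simp
    ultimately have "Suc (length p) < N" using Cons.prems(2) by linarith
    then have "stp a N (p, c) x = (p @ [x], c)" by (simp add: stp_def)
    then show ?thesis using Cons.IH[of "p @ [x]", OF False] Cons.prems by simp
  qed
qed

lemma stp_rep: "0 < N \<Longrightarrow> foldl (stp a N) ([], c) (replicate (Suc k * N) x) = ([], x \<noteq> a)"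
proof (induction k arbitrary: c)
  case 0
  have "foldl (stp a N) ([], c) (replicate N x) = ([], replicate N x \<noteq> replicate N a)"
    using stp_block[of "replicate N x" "[]" N a c] 0 by simp
  then show ?case using 0 by simp
next
  case (Suc k)
  have r: "replicate (Suc (Suc k) * N) x = replicate N x @ replicate (Suc k * N) x"
    by (simp add: replicate_add[symmetric])
  have "foldl (stp a N) ([], c) (replicate N x) = ([], replicate N x \<noteq> replicate N a)"
    using stp_block[of "replicate N x" "[]" N a c] Suc.prems by simp
  then show ?case unfolding r using Suc by simp
qed

lemma stp_long: "0 < N \<Longrightarrow> N \<le> length w \<Longrightarrow>
  foldl (stp a N) ([], c) w = foldl (stp a N) ([], take N w \<noteq> replicate N a) (drop N w)"
proof -
  assume N: "0 < N" "N \<le> length w"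
  have "w = take N w @ drop N w" by simp
  then have "foldl (stp a N) ([], c) w = foldl (stp a N) (foldl (stp a N) ([], c) (take N w)) (drop N w)"
    by (metis foldl_append)
  moreover have "foldl (stp a N) ([], c) (take N w) = ([], take N w \<noteq> replicate N a)"
  proof -
    have "take N w \<noteq> []" using N by (cases w) auto
    moreover have "length (take N w) = N" using N by simp
    ultimately show ?thesis using stp_block[of "take N w" "[]" N a c] by simp
  qed
  ultimately show ?thesis by simp
qed

lemma EE_props:
  assumes Al: "finite Al" and a: "a \<in> Al" and b: "b \<in> Al" "b \<noteq> a" and N: "0 < N"
    and W: "W \<subseteq> lists Al"
  shows "is_dfa Al (EE Al W a N m)" "finite_part Al (EE Al W a N m) = {}"
proof -
  let ?D = "EE Al W a N m"
  define xx where "xx = (\<lambda>c. if c then b else a)"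
  have xxc: "(xx c \<noteq> a) = c" for c using b by (simp add: xx_def)
  have xxA: "xx c \<in> Al" for c using a b by (simp add: xx_def)
  have reach: "foldl (stp a N) ([], m) (replicate (Suc k * N) (xx c) @ p) = (p, c)"
    if "length p < N" for p c k
  proof -
    have "foldl (stp a N) ([], m) (replicate (Suc k * N) (xx c)) = ([], c)"
      using stp_rep[OF N, where a=a and c=m and k=k and x="xx c"] xxc by simp
    then show ?thesis using stp_short[where p="[]" and w=p and N=N and a=a and c=c] that by simp
  qed
  have fin: "finite {p \<in> lists Al. length p < N}"
    by (rule finite_subset[OF _ finite_lists_length_le[OF Al, of N]]) auto
  show dfa: "is_dfa Al ?D"
    unfolding is_dfa_def
  proof (intro conjI ballI)
    show "finite (states ?D)" using fin by (simp add: EE_def)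
    show "start ?D \<in> states ?D" using N by (simp add: EE_def)
    show "accept ?D \<subseteq> states ?D" using W by (auto simp: EE_def)
  next
    fix q x assume q: "q \<in> states ?D" and x: "x \<in> Al"
    obtain p c where pc: "q = (p, c)" by (cases q)
    show "delta ?D q x \<in> states ?D"
      using q x unfolding pc by (auto simp: EE_def stp_def)
  next
    fix q assume q: "q \<in> states ?D"
    obtain p c where pc: "q = (p, c)" by (cases q)
    have p: "p \<in> lists Al" "length p < N" using q pc by (auto simp: EE_def)
    have "replicate (Suc 0 * N) (xx c) @ p \<in> lists Al" using p xxA by auto
    moreover have "delta_hat ?D (start ?D) (replicate (Suc 0 * N) (xx c) @ p) = q"
      using reach[OF p(2), where c=c and k=0] pc unfolding EE_dh by (simp add: EE_def)
    ultimately show "\<exists>w\<in>lists Al. delta_hat ?D (start ?D) w = q" by blast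
  qed
  show "finite_part Al ?D = {}"
  proof (rule ccontr)
    assume "finite_part Al ?D \<noteq> {}"
    then obtain q where q: "q \<in> states ?D"
      and fq: "finite {w \<in> lists Al. delta_hat ?D (start ?D) w = q}"
      by (auto simp: finite_part_def)
    obtain p c where pc: "q = (p, c)" by (cases q)
    have p: "p \<in> lists Al" "length p < N" using q pc by (auto simp: EE_def)
    define g where "g = (\<lambda>k. replicate (Suc k * N) (xx c) @ p)"
    have "range g \<subseteq> {w \<in> lists Al. delta_hat ?D (start ?D) w = q}"
    proof
      fix w assume "w \<in> range g"
      then obtain k where k: "w = g k" by blast
      have "w \<in> lists Al" using k p xxA by (auto simp: g_def)
      moreover have "delta_hat ?D (start ?D) w = q"
        using reach[OF p(2), where c=c and k=k] pc k unfolding EE_dh by (simp add: EE_def g_def)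
      ultimately show "w \<in> {w \<in> lists Al. delta_hat ?D (start ?D) w = q}" by blast
    qed
    then have "finite (range g)" using fq finite_subset by blast
    moreover have "inj g"
    proof (rule injI)
      fix k1 k2 assume "g k1 = g k2"
      then have "length (g k1) = length (g k2)" by simp
      then have "Suc k1 * N = Suc k2 * N" by (simp add: g_def)
      then show "k1 = k2" using N by simp
    qed
    ultimately have "finite (UNIV :: nat set)" using finite_imageD by blast
    then show False by simp
  qed
qed

lemma EE_lang:
  assumes N: "0 < N" and W: "\<And>w. w \<in> W \<Longrightarrow> length w < N"
  shows "lang Al (EE Al W a N m) = {w \<in> lists Al. (length w < N \<and> w \<in> W \<and> \<not> m) \<or>
     (N \<le> length w \<and> foldl (stp a N) ([], take N w \<noteq> replicate N a) (drop N w) \<in> {p \<in> W. length p < N} \<times> {False})}"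
proof -
  have "foldl (stp a N) ([], m) w \<in> {p \<in> W. length p < N} \<times> {False} \<longleftrightarrow>
     (length w < N \<and> w \<in> W \<and> \<not> m) \<or>
     (N \<le> length w \<and> foldl (stp a N) ([], take N w \<noteq> replicate N a) (drop N w) \<in> {p \<in> W. length p < N} \<times> {False})"
    for w
  proof (cases "length w < N")
    case True
    then show ?thesis using stp_short[of "[]" w N a m] by auto
  next
    case False
    then show ?thesis using stp_long[OF N, of w a m] by auto
  qed
  then show ?thesis unfolding lang_def EE_dh by (simp add: EE_def)
qed

theorem mainTheorem11:
  fixes Al :: "'a set" and W :: "'a list set"
  assumes "finite Al" and "card Al \<ge> 2"
    and "W \<subseteq> lists Al" and "finite W"
  shows "\<exists>(D :: (nat, 'a) dfa) (D' :: (nat, 'a) dfa).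
           minimized Al D \<and> minimized Al D' \<and>
           finite_part Al D = {} \<and> finite_part Al D' = {} \<and>
           (lang Al D - lang Al D') \<union> (lang Al D' - lang Al D) = W"
proof -
  have "Al \<noteq> {}" using assms(2) by auto
  then obtain a where a: "a \<in> Al" by blast
  have "\<not> Al \<subseteq> {a}"
  proof
    assume "Al \<subseteq> {a}"
    then have "card Al \<le> card {a}" by (rule card_mono[rotated]) simp
    then show False using assms(2) by simp
  qed
  then obtain b where b: "b \<in> Al" "b \<noteq> a" by blast
  define N where "N = Suc (Max (insert 0 (length ` W)))"
  have N: "0 < N" by (simp add: N_def)
  have WN: "length w < N" if "w \<in> W" for w
  proof -
    have "length w \<le> Max (insert 0 (length ` W))"
      using that assms(4) by (intro Max_ge) auto
    then show ?thesis by (simp add: N_def)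
  qed
  obtain M1 :: "(nat, 'a) dfa" where M1: "minimized Al M1" "finite_part Al M1 = {}"
    "lang Al M1 = lang Al (EE Al W a N True)"
    using minimize[OF EE_props[OF assms(1) a b N assms(3)]] by blast
  obtain M2 :: "(nat, 'a) dfa" where M2: "minimized Al M2" "finite_part Al M2 = {}"
    "lang Al M2 = lang Al (EE Al W a N False)"
    using minimize[OF EE_props[OF assms(1) a b N assms(3)]] by blast
  have "(lang Al M1 - lang Al M2) \<union> (lang Al M2 - lang Al M1) = W"
  proof -
    have l1: "lang Al (EE Al W a N True) = {w \<in> lists Al. (length w < N \<and> w \<in> W \<and> \<not> True) \<or>
     (N \<le> length w \<and> foldl (stp a N) ([], take N w \<noteq> replicate N a) (drop N w) \<in> {p \<in> W. length p < N} \<times> {False})}"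
      by (rule EE_lang[OF N WN])
    have l2: "lang Al (EE Al W a N False) = {w \<in> lists Al. (length w < N \<and> w \<in> W \<and> \<not> False) \<or>
     (N \<le> length w \<and> foldl (stp a N) ([], take N w \<noteq> replicate N a) (drop N w) \<in> {p \<in> W. length p < N} \<times> {False})}"
      by (rule EE_lang[OF N WN])
    show ?thesis unfolding M1(3) M2(3) l1 l2 using assms(3) by (auto dest: WN)
  qed
  then show ?thesis using M1 M2 by blast
qed

end
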